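(* For $a\in(0,1]$ let $C_a=\{(x,y)\in\mathbb{Z}^2: x\ge0,\ |y|\le ax\}$ and let $m\in\mathbb{R}$. Then the divisible sandpile $s_a=m\mathbf 1_{C_a}$ on $\mathbb{Z}^2$ stabilizes if $\frac{2ma}{1+a^2}\le1$. Moreover, the divisible sandpile $s_0(x,y)=x\,\mathbf 1_{\{x>0,\,y=0\}}$ on $\mathbb{Z}^2$ stabilizes.
   Context: $\mathbb{Z}^2$ has its nearest-neighbour graph structure, $\Delta u(x)=\sum_{y\sim x}(u(y)-u(x))$. $s$ stabilizes if there exists $f:\mathbb{Z}^2\to[0,\infty)$ with $s+\Delta f\le1$ pointwise. *)

theory Defs
  imports Main "HOL.Real"
begin

definition lap :: "(int \<times> int \<Rightarrow> real) \<Rightarrow> int \<times> int \<Rightarrow> real" where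
  "lap u p = (case p of (x, y) \<Rightarrow>
      (u (x + 1, y) - u (x, y)) + (u (x - 1, y) - u (x, y))
    + (u (x, y + 1) - u (x, y)) + (u (x, y - 1) - u (x, y)))"

definition stabilizes :: "(int \<times> int \<Rightarrow> real) \<Rightarrow> bool" where
  "stabilizes s \<longleftrightarrow> (\<exists>f :: int \<times> int \<Rightarrow> real. (\<forall>p. f p \<ge> 0) \<and> (\<forall>p. s p + lap f p \<le> 1))"

definition cone :: "real \<Rightarrow> (int \<times> int) set" where
  "cone a = {(x, y). x \<ge> 0 \<and> real_of_int \<bar>y\<bar> \<le> a * real_of_int x}"

end

theory Submission imports Defs begin

definition phi :: "real \<Rightarrow> real" where "phi k = (max 0 k)^2/4"

lemma phi_second: "phi (k+1) + phi (k-1) - 2*phi k \<le> 1/2"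
proof -
  consider "k \<ge> 1" | "0 \<le> k \<and> k < 1" | "-1 \<le> k \<and> k < 0" | "k < -1" by linarith
  then show ?thesis
  proof cases
    case 1 then show ?thesis by (simp add: phi_def max_def power2_eq_square field_simps)
  next
    case 2 then have "(k-1)^2 \<ge> 0" by simp
    with 2 show ?thesis by (simp add: phi_def max_def power2_eq_square field_simps)
  next
    case 3 then have "(k+1)^2 \<le> 2" by (smt (verit) power_le_one)
    with 3 show ?thesis by (simp add: phi_def max_def)
  next
    case 4 then show ?thesis by (simp add: phi_def max_def)
  qed
qed

lemma phi_mono: "phi (k-1) \<le> phi k"
  unfolding phi_def by (rule divide_right_mono, rule power_mono) auto

lemma phi_nonneg: "phi k \<ge> 0" unfolding phi_def by simp

definition PP :: "real \<Rightarrow> int \<Rightarrow> real" where "PP X y = phi (X - \<bar>real_of_int y\<bar>)"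

lemma PP_lap: "PP (X+1) y + PP (X-1) y + PP X (y+1) + PP X (y-1) - 4*PP X y \<le> 1"
proof -
  let ?k = "X - \<bar>real_of_int y\<bar>"
  have h1: "PP (X+1) y = phi (?k+1)" "PP (X-1) y = phi (?k - 1)" "PP X y = phi ?k"
    by (simp_all add: PP_def algebra_simps)
  consider "y > 0" | "y = 0" | "y < 0" by linarith
  then show ?thesis
  proof cases
    case 1
    then have "PP X (y+1) = phi (?k - 1)" "PP X (y-1) = phi (?k + 1)"
      by (simp_all add: PP_def algebra_simps)
    then show ?thesis using h1 phi_second[of ?k] by linarith
  next
    case 2
    then have "PP X (y+1) = phi (?k - 1)" "PP X (y-1) = phi (?k - 1)"
      by (simp_all add: PP_def algebra_simps)
    then show ?thesis using h1 phi_second[of ?k] phi_mono[of ?k] by linarith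
  next
    case 3
    then have "PP X (y+1) = phi (?k + 1)" "PP X (y-1) = phi (?k - 1)"
      by (simp_all add: PP_def algebra_simps)
    then show ?thesis using h1 phi_second[of ?k] by linarith
  qed
qed

definition QQ :: "real \<Rightarrow> real \<Rightarrow> real \<Rightarrow> real" where
  "QQ a X Y = (1-a)/(4*a)*(a*X^2 - Y^2)"
definition inC :: "real \<Rightarrow> real \<Rightarrow> real \<Rightarrow> bool" where
  "inC a X Y \<longleftrightarrow> 0 \<le> X \<and> \<bar>Y\<bar> \<le> a*X"
definition GG :: "real \<Rightarrow> real \<Rightarrow> real \<Rightarrow> real" where
  "GG a X Y = (max 0 (\<bar>Y\<bar> - a*X))^2/(4*a)"
definition FF :: "real \<Rightarrow> real \<Rightarrow> int \<Rightarrow> real" where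
  "FF a X y = (if inC a X (of_int y) then QQ a X (of_int y) else PP X y)"

lemma PQ_ident:
  assumes "0 < a"
  shows "(X - \<bar>Y\<bar>)^2/4 = QQ a X Y + (\<bar>Y\<bar> - a*X)^2/(4*a)"
  using assms unfolding QQ_def by (simp add: field_simps power2_eq_square)

lemma FF_nonneg:
  assumes "0 < a" "a \<le> 1" shows "FF a X y \<ge> 0"
proof (cases "inC a X (of_int y)")
  case True
  let ?Y = "real_of_int y"
  from True have "\<bar>?Y\<bar> \<le> a*X" "0 \<le> X" by (auto simp: inC_def)
  then have "?Y^2 \<le> (a*X)^2" by (metis abs_ge_zero abs_le_square_iff order_trans power2_abs power_mono)
  also have "\<dots> \<le> a*X^2" using assms \<open>0 \<le> X\<close>
  proof -
    have "a*X \<le> X" using assms \<open>0 \<le> X\<close> by (simp add: mult_left_le_one_le)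
    then have "X*(a*X) \<le> X*X" using \<open>0 \<le> X\<close> by (rule mult_left_mono)
    then have "a*(X*(a*X)) \<le> a*(X*X)" by (rule mult_left_mono) (use assms in auto)
    then show ?thesis by (simp add: power2_eq_square algebra_simps)
  qed
  finally show ?thesis using True assms by (simp add: FF_def QQ_def)
next
  case False then show ?thesis by (simp add: FF_def PP_def phi_nonneg)
qed

lemma FF_le_PP:
  assumes "0 < a" "a \<le> 1" shows "FF a X y \<le> PP X y"
proof (cases "inC a X (of_int y)")
  case True
  let ?Y = "real_of_int y"
  from True have h: "\<bar>?Y\<bar> \<le> a*X" "0 \<le> X" by (auto simp: inC_def)
  have "a*X \<le> X" using assms h by (simp add: mult_left_le_one_le)
  then have "PP X y = (X - \<bar>?Y\<bar>)^2/4" using h by (simp add: PP_def phi_def max_def)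
  also have "\<dots> = QQ a X ?Y + (\<bar>?Y\<bar> - a*X)^2/(4*a)" by (rule PQ_ident[OF assms(1)])
  also have "\<dots> \<ge> QQ a X ?Y" using assms by simp
  finally show ?thesis using True by (simp add: FF_def)
next
  case False then show ?thesis by (simp add: FF_def)
qed

lemma FF_le_QG:
  assumes "0 < a" "a \<le> 1" shows "FF a X y \<le> QQ a X (of_int y) + GG a X (of_int y)"
proof (cases "inC a X (of_int y)")
  case True then show ?thesis using assms by (simp add: FF_def GG_def)
next
  case False
  let ?Y = "real_of_int y"
  have pos: "\<bar>?Y\<bar> - a*X > 0"
  proof (cases "X < 0")
    case True then show ?thesis using assms by (smt (verit) abs_ge_zero mult_pos_neg)
  next
    case False then show ?thesis using \<open>\<not> inC a X ?Y\<close> by (auto simp: inC_def)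
  qed
  have "PP X y \<le> (X - \<bar>?Y\<bar>)^2/4" by (simp add: PP_def phi_def max_def)
  also have "\<dots> = QQ a X ?Y + (\<bar>?Y\<bar> - a*X)^2/(4*a)" by (rule PQ_ident[OF assms(1)])
  also have "\<dots> = QQ a X ?Y + GG a X ?Y" using pos by (simp add: GG_def)
  finally show ?thesis using False by (simp add: FF_def)
qed

lemma QQ_lap:
  assumes "0 < a"
  shows "QQ a (X+1) Y + QQ a (X-1) Y + QQ a X (Y+1) + QQ a X (Y-1) - 4*QQ a X Y = - ((1-a)^2/(2*a))"
  using assms unfolding QQ_def by (simp add: field_simps power2_eq_square)

lemma GG_nonneg: "0 < a \<Longrightarrow> GG a X Y \<ge> 0" by (simp add: GG_def)

lemma GG_zero: "0 < a \<Longrightarrow> \<bar>Y\<bar> \<le> a*X \<Longrightarrow> GG a X Y = 0" by (simp add: GG_def)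

lemma GG_le:
  assumes "0 < a" "t \<ge> 0" "\<bar>Y\<bar> - a*X \<le> t"
  shows "GG a X Y \<le> t^2/(4*a)"
proof -
  have "(max 0 (\<bar>Y\<bar> - a*X))^2 \<le> t^2" using assms by (intro power_mono) auto
  then show ?thesis using assms by (simp add: GG_def divide_right_mono)
qed

lemma lap_FF_gen:
  assumes "0 < a" "a \<le> 1" "inC a X (of_int y)"
  shows "FF a (X+1) y + FF a (X-1) y + FF a X (y+1) + FF a X (y-1) - 4*FF a X y
     \<le> - ((1-a)^2/(2*a)) + GG a (X+1) (of_int y) + GG a (X-1) (of_int y) + GG a X (of_int y + 1) + GG a X (of_int y - 1)"
proof -
  have e: "FF a X y = QQ a X (of_int y)" using assms by (simp add: FF_def)
  have "FF a X (y+1) \<le> QQ a X (of_int y + 1) + GG a X (of_int y + 1)"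
    using FF_le_QG[OF assms(1,2), of X "y+1"] by simp
  moreover have "FF a X (y-1) \<le> QQ a X (of_int y - 1) + GG a X (of_int y - 1)"
    using FF_le_QG[OF assms(1,2), of X "y-1"] by simp
  moreover note FF_le_QG[OF assms(1,2), of "X+1" y] FF_le_QG[OF assms(1,2), of "X-1" y]
  ultimately show ?thesis using e QQ_lap[OF assms(1), of X "of_int y"] by linarith
qed

lemma lap_FF_le1:
  assumes "0 < a" "a \<le> 1"
  shows "FF a (X+1) y + FF a (X-1) y + FF a X (y+1) + FF a X (y-1) - 4*FF a X y \<le> 1"
proof (cases "inC a X (of_int y)")
  case False
  then have "FF a X y = PP X y" by (simp add: FF_def)
  then show ?thesis using PP_lap[of X y] FF_le_PP[OF assms, of "X+1" y] FF_le_PP[OF assms, of "X-1" y]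
     FF_le_PP[OF assms, of X "y+1"] FF_le_PP[OF assms, of X "y-1"] by linarith
next
  case True
  let ?Y = "real_of_int y"
  from True have h: "\<bar>?Y\<bar> \<le> a*X" "0 \<le> X" by (auto simp: inC_def)
  have g1: "GG a (X+1) ?Y = 0" using h assms by (intro GG_zero) (auto simp: algebra_simps)
  have g2: "GG a (X-1) ?Y \<le> a^2/(4*a)" using h assms by (intro GG_le) (auto simp: algebra_simps)
  have g3: "GG a X (?Y+1) \<le> 1^2/(4*a)" using h assms by (intro GG_le) auto
  have g4: "GG a X (?Y-1) \<le> 1^2/(4*a)" using h assms by (intro GG_le) auto
  have "- ((1-a)^2/(2*a)) + a^2/(4*a) + 1^2/(4*a) + 1^2/(4*a) = 1 - a/4"
    using assms by (simp add: field_simps power2_eq_square)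
  then show ?thesis using lap_FF_gen[OF assms True] g1 g2 g3 g4 assms by linarith
qed

lemma lap_shift:
  "lap (\<lambda>p. FF a (of_int (fst p) + c) (snd p)) (x,y) =
   FF a ((of_int x + c)+1) y + FF a ((of_int x + c)-1) y + FF a (of_int x + c) (y+1)
   + FF a (of_int x + c) (y-1) - 4*FF a (of_int x + c) y"
proof -
  have "real_of_int (x+1) + c = (of_int x + c) + 1" "real_of_int (x-1) + c = (of_int x + c) - 1" by simp_all
  then show ?thesis by (simp add: lap_def algebra_simps)
qed

lemma part1:
  assumes "0 < a" "a \<le> 1" "2 * m * a / (1 + a^2) \<le> 1"
  shows "stabilizes (\<lambda>p. if p \<in> cone a then m else 0)"
  unfolding stabilizes_def
proof (intro exI conjI allI)
  let ?c = "1 + 1/a"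
  let ?f = "\<lambda>p. FF a (of_int (fst p) + ?c) (snd p)"
  show "?f p \<ge> 0" for p using FF_nonneg[OF assms(1,2)] by blast
  fix p :: "int \<times> int"
  obtain x y where p: "p = (x,y)" by force
  let ?X = "real_of_int x + ?c"
  let ?Y = "real_of_int y"
  have L: "lap ?f p = FF a (?X+1) y + FF a (?X-1) y + FF a ?X (y+1) + FF a ?X (y-1) - 4*FF a ?X y"
    unfolding p by (rule lap_shift)
  show "(if p \<in> cone a then m else 0) + lap ?f p \<le> 1"
  proof (cases "p \<in> cone a")
    case False
    then show ?thesis using L lap_FF_le1[OF assms(1,2), of ?X y] by simp
  next
    case True
    then have h: "x \<ge> 0" "\<bar>?Y\<bar> \<le> a * of_int x" using p by (auto simp: cone_def)
    have ac: "a * ?c = a + 1" using assms by (simp add: field_simps)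
    have inC: "inC a ?X ?Y" unfolding inC_def using h assms ac by (auto simp: algebra_simps)
    have g1: "GG a (?X+1) ?Y = 0" using h assms ac by (intro GG_zero) (auto simp: algebra_simps)
    have g2: "GG a (?X-1) ?Y = 0" using h assms ac by (intro GG_zero) (auto simp: algebra_simps)
    have g3: "GG a ?X (?Y+1) = 0" using h assms ac by (intro GG_zero) (auto simp: algebra_simps)
    have g4: "GG a ?X (?Y-1) = 0" using h assms ac by (intro GG_zero) (auto simp: algebra_simps)
    have "2*m*a \<le> 1 + a^2" using assms by (simp add: field_simps add_pos_nonneg)
    then have "m \<le> 1 + (1-a)^2/(2*a)" using assms by (simp add: field_simps power2_eq_square)
    then show ?thesis using True L lap_FF_gen[OF assms(1,2) inC] g1 g2 g3 g4 by simp
  qed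
qed

lemma part2: "stabilizes (\<lambda>(x, y). if x > 0 \<and> y = 0 then real_of_int x else 0)"
  unfolding stabilizes_def
proof (intro exI conjI allI)
  let ?f = "\<lambda>p::int\<times>int. (\<bar>real_of_int (fst p)\<bar> - \<bar>real_of_int (snd p)\<bar>)^2/4"
  show "?f p \<ge> 0" for p by simp
  fix p :: "int \<times> int"
  obtain x y where p: "p = (x,y)" by force
  consider "x > 0" | "x = 0" | "x < 0" by linarith
  then show "(case p of (x, y) \<Rightarrow> if x > 0 \<and> y = 0 then real_of_int x else 0) + lap ?f p \<le> 1"
  proof cases
    case 1
    consider "y > 0" | "y = 0" | "y < 0" by linarith
    then show ?thesis using 1 by cases (auto simp: p lap_def power2_eq_square field_simps)
  next
    case 2
    consider "y > 0" | "y = 0" | "y < 0" by linarith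
    then show ?thesis using 2 by cases (auto simp: p lap_def power2_eq_square field_simps)
  next
    case 3
    consider "y > 0" | "y = 0" | "y < 0" by linarith
    then show ?thesis using 3 by cases (auto simp: p lap_def power2_eq_square field_simps)
  qed
qed

theorem lemma6p4:
  shows "(\<forall>(a::real) (m::real). 0 < a \<and> a \<le> 1 \<and> 2 * m * a / (1 + a^2) \<le> 1 \<longrightarrow>
            stabilizes (\<lambda>p. if p \<in> cone a then m else 0))
       \<and> stabilizes (\<lambda>(x, y). if x > 0 \<and> y = 0 then real_of_int x else 0)"
  using part1 part2 by blast

end
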